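(* Let $Y$, $\nu$, $\nu'$, $d(\cdot,x,n)$ be as in the context, and put $b_k=\log A_k$. Then: 1) For $\nu'$-almost every $x\in Y$, $$\liminf_{n\to\infty}d(\nu,x,n)=\liminf_{n\to\infty}\frac{\sum_{k=1}^n x_k}{\sum_{k=1}^n b_k},\qquad \limsup_{n\to\infty}d(\nu,x,n)=\limsup_{n\to\infty}\frac{\sum_{k=1}^n x_k}{\sum_{k=1}^n b_k},$$ where $x_k=-p_k'\log p_k-(1-p_k')\log(1-p_k)$. 2) For $\nu'$-almost every $x\in\operatorname{supp}(\nu')\subset Y$, $$\liminf_{n\to\infty}d(\nu',x,n)=\liminf_{n\to\infty}\frac{\sum_{k=1}^n y_k}{\sum_{k=1}^n b_k},\qquad \limsup_{n\to\infty}d(\nu',x,n)=\limsup_{n\to\infty}\frac{\sum_{k=1}^n y_k}{\sum_{k=1}^n b_k},$$ where $y_k=-p_k'\log p_k'-(1-p_k')\log(1-p_k')$ (with $0\log0=0$).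
   Context: Let $\mathcal A=\{0,1\}$. Let $(A_n)_{n\ge1}$ be real numbers with $A_n\ge2$. Define closed intervals $I_w$, $w\in\mathcal A^n$: $I_\emptyset=[0,1]$, and for $w\in\mathcal A^{n-1}$ with $I_w=[x_w,x_w+\ell]$, $I_{w0}=[x_w,x_w+\ell/A_n]$, $I_{w1}=[x_w+\ell-\ell/A_n,x_w+\ell]$. Let $Y=\bigcap_n\bigcup_{w\in\mathcal A^n}I_w$. Fix $0<a\le b<1$ and $(p_n)_{n\ge1}$ with $a\le p_n\le b$; let $\nu$ be the Borel probability measure with $\nu(I_\emptyset)=1$, $\nu(I_{w0})=p_n\nu(I_w)$, $\nu(I_{w1})=(1-p_n)\nu(I_w)$ for $w\in\mathcal A^{n-1}$ (so $\operatorname{supp}\nu=Y$). Given another sequence $(p_n')_{n\ge1}$ with $0\le p_n'\le1$, let $\nu'$ be the measure constructed in the same way with $p_n'$ in place of $p_n$. For $x\in Y$ and $n\ge1$, $I_n(x)$ denotes a level-$n$ interval $I_w$, $w\in\mathcal A^n$, containing $x$ (chosen consistently along the coding of $x$), and for a measure $\eta$, $d(\eta,x,n)=\frac{\log\eta(I_n(x))}{\log|I_n(x)|}$. *)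

theory Defs
  imports "HOL-Probability.Probability"
begin

text \<open>Points of Y are represented by their codings \<omega> :: nat \<Rightarrow> bool, where
  \<omega> k (k \<ge> 1) is the k-th digit: False = digit 0, True = digit 1.  Coordinate 0 is unused.\<close>

fun Ilen :: "(nat \<Rightarrow> real) \<Rightarrow> nat \<Rightarrow> real" where
  "Ilen A 0 = 1"
| "Ilen A (Suc n) = Ilen A n / A (Suc n)"

fun Ileft :: "(nat \<Rightarrow> real) \<Rightarrow> (nat \<Rightarrow> bool) \<Rightarrow> nat \<Rightarrow> real" where
  "Ileft A \<omega> 0 = 0"
| "Ileft A \<omega> (Suc n) =
     (if \<omega> (Suc n) then Ileft A \<omega> n + Ilen A n - Ilen A (Suc n) else Ileft A \<omega> n)"

definition Iint :: "(nat \<Rightarrow> real) \<Rightarrow> (nat \<Rightarrow> bool) \<Rightarrow> nat \<Rightarrow> real set" where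
  "Iint A \<omega> n = {Ileft A \<omega> n .. Ileft A \<omega> n + Ilen A n}"

text \<open>The Bernoulli-type measure with weights q: digit 0 at level k has probability q k,
  represented on coding space as a product measure.\<close>
definition coding_meas :: "(nat \<Rightarrow> real) \<Rightarrow> (nat \<Rightarrow> bool) measure" where
  "coding_meas q = (\<Pi>\<^sub>M k\<in>UNIV. measure_pmf (bernoulli_pmf (1 - q k)))"

text \<open>The set of codings whose first n digits agree with \<omega> (i.e. whose level-n interval is I_n(\<omega>)).\<close>
definition cyl :: "(nat \<Rightarrow> bool) measure \<Rightarrow> (nat \<Rightarrow> bool) \<Rightarrow> nat \<Rightarrow> (nat \<Rightarrow> bool) set" where
  "cyl M \<omega> n = {\<omega>' \<in> space M. \<forall>k\<in>{1..n}. \<omega>' k = \<omega> k}"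

definition dloc :: "(nat \<Rightarrow> bool) measure \<Rightarrow> (nat \<Rightarrow> real) \<Rightarrow> (nat \<Rightarrow> bool) \<Rightarrow> nat \<Rightarrow> real" where
  "dloc M A \<omega> n = ln (measure M (cyl M \<omega> n)) / ln (measure lborel (Iint A \<omega> n))"

end

theory Submission
  imports Defs "HOL-Library.Discrete_Functions"
begin


lemma det_slln:
  fixes G U :: "nat \<Rightarrow> real" and C :: real
  assumes monoG: "mono G" and monoU: "mono U"
    and incU: "\<And>n. U (Suc n) - U n \<le> C"
    and ev: "\<And>\<epsilon>. \<epsilon> > 0 \<Longrightarrow> eventually (\<lambda>j. \<bar>G (j^2) - U (j^2)\<bar> \<le> \<epsilon> * real (j^2)) sequentially"
  shows "(\<lambda>n. (G n - U n) / real n) \<longlonglongrightarrow> 0"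
proof -
  have C0: "C \<ge> 0" using incU[of 0] monoU by (smt (verit) lessI less_imp_le_nat monoD)
  have incU': "U (m + d) - U m \<le> C * d" for m d
  proof (induction d)
    case 0 then show ?case by simp
  next
    case (Suc d) then show ?case using incU[of "m+d"] by (simp add: algebra_simps)
  qed
  show ?thesis unfolding LIMSEQ_iff
  proof (intro allI impI)
    fix e :: real assume e: "e > 0"
    obtain J where J: "\<And>j. j \<ge> J \<Longrightarrow> \<bar>G (j^2) - U (j^2)\<bar> \<le> e/8 * real (j^2)"
      using ev[of "e/8"] e unfolding eventually_sequentially by auto
    obtain J' :: nat where J': "6*C/e < real J'" using reals_Archimedean2 by blast
    show "\<exists>no. \<forall>n\<ge>no. norm ((G n - U n) / real n - 0) < e"
    proof (intro exI allI impI)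
      fix n assume n: "(Suc (max J J'))^2 \<le> n"
      define j where "j = floor_sqrt n"
      have jge: "Suc (max J J') \<le> j" unfolding j_def using n le_floor_sqrtI by blast
      have j1: "j^2 \<le> n" unfolding j_def by simp
      have j2: "n \<le> (Suc j)^2" unfolding j_def using Suc_floor_sqrt_power2_gt[of n] by linarith
      have jpos: "j \<ge> 1" using jge by simp
      have jJ: "J \<le> j" "J' < j" using jge by auto
      have d: "(Suc j)^2 = j^2 + (2*j+1)" by (simp add: power2_eq_square)
      have Ud: "U ((Suc j)^2) - U (j^2) \<le> C * (2*j+1)"
        using incU'[of "j^2" "2*j+1"] d by simp
      have A1: "\<bar>G (j^2) - U (j^2)\<bar> \<le> e/8 * real (j^2)" using J jJ by auto
      have A2: "\<bar>G ((Suc j)^2) - U ((Suc j)^2)\<bar> \<le> e/8 * real ((Suc j)^2)" using J[of "Suc j"] jJ by linarith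
      have Gm1: "G (j^2) \<le> G n" "G n \<le> G ((Suc j)^2)" using monoG j1 j2 by (auto dest: monoD)
      have Um1: "U (j^2) \<le> U n" "U n \<le> U ((Suc j)^2)" using monoU j1 j2 by (auto dest: monoD)
      define x where "x = real j"
      have x1: "x \<ge> 1" using jpos x_def by simp
      have rj: "real (j^2) = x^2" "real ((Suc j)^2) = (x+1)^2" "real (2*j+1) = 2*x+1"
        unfolding x_def by simp_all
      have sq: "e/8 * x^2 \<le> e/8 * (x+1)^2" using e x1 by (intro mult_left_mono power_mono) auto
      have A1': "\<bar>G (j^2) - U (j^2)\<bar> \<le> e/8 * x^2" using A1 rj by simp
      have A2': "\<bar>G ((Suc j)^2) - U ((Suc j)^2)\<bar> \<le> e/8 * (x+1)^2" using A2 rj by (simp add: add.commute)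
      have Ud': "U ((Suc j)^2) - U (j^2) \<le> C * (2*x+1)" using Ud rj by (simp add: add.commute)
      have bound: "\<bar>G n - U n\<bar> \<le> e/8 * (x+1)^2 + C * (2*x+1)"
        using abs_le_D2[OF A1'] abs_le_D1[OF A2'] Gm1 Um1 Ud' sq unfolding abs_le_iff by linarith
      have b2: "e/8 * (x+1)^2 + C * (2*x+1) \<le> e/2 * x^2 + 3*C*x"
      proof -
        have "(x+1)^2 \<le> (2*x)^2" using x1 by (intro power_mono) auto
        then have "(x+1)^2 \<le> 4 * x^2" by (simp add: power_mult_distrib)
        then have "e/8 * (x+1)^2 \<le> e/8 * (4*x^2)" using e by (intro mult_left_mono) auto
        moreover have "C * (2*x+1) \<le> C * (3*x)" using C0 x1 by (intro mult_left_mono) auto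
        ultimately show ?thesis by simp
      qed
      have nx: "x^2 \<le> real n" using j1 rj by (metis of_nat_le_iff)
      have xJ': "6*C/e < x" using J' jJ x_def by (smt (verit) of_nat_less_iff)
      have "3*C/x < e/2"
      proof -
        have "6*C < e*x" using xJ' e by (simp add: field_simps)
        then show ?thesis using x1 by (simp add: field_simps)
      qed
      have "\<bar>G n - U n\<bar> / real n \<le> (e/2 * x^2 + 3*C*x) / x^2"
      proof -
        have "\<bar>G n - U n\<bar> / real n \<le> \<bar>G n - U n\<bar> / x^2"
          proof (intro divide_left_mono)
            have "0 < x^2" using x1 by simp
            then show "0 < real n * x^2" using nx by (intro mult_pos_pos) linarith+
          qed (use nx in auto)
        also have "\<dots> \<le> (e/2 * x^2 + 3*C*x) / x^2"
          using bound b2 x1 by (intro divide_right_mono) auto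
        finally show ?thesis .
      qed
      also have "\<dots> = e/2 + 3*C/x" using x1 by (simp add: field_simps power2_eq_square)
      finally show "norm ((G n - U n) / real n - 0) < e" using \<open>3*C/x < e/2\<close> by simp
    qed
  qed
qed



lemma psM: "prob_space (PiM UNIV (\<lambda>k. measure_pmf (Q k)))"
  by (intro prob_space_PiM measure_pmf.prob_space_axioms)

lemma int_coord:
  "integral\<^sup>L (PiM UNIV (\<lambda>k. measure_pmf (Q k))) (\<lambda>\<omega>. f (\<omega> k)) = integral\<^sup>L (measure_pmf (Q k)) (f :: bool \<Rightarrow> real)"
proof -
  have "distr (PiM UNIV (\<lambda>k. measure_pmf (Q k))) (measure_pmf (Q k)) (\<lambda>\<omega>. \<omega> k) = measure_pmf (Q k)"
    by (intro distr_PiM_component measure_pmf.prob_space_axioms) auto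
  then show ?thesis
    using integral_distr[of "\<lambda>\<omega>. \<omega> k" "PiM UNIV (\<lambda>k. measure_pmf (Q k))" "measure_pmf (Q k)" f]
    by (simp add: measurable_component_singleton)
qed

lemma integrable_coord:
  "integrable (PiM UNIV (\<lambda>k. measure_pmf (Q k))) (\<lambda>\<omega>. (f :: bool \<Rightarrow> real) (\<omega> k))"
proof -
  have "distr (PiM UNIV (\<lambda>k. measure_pmf (Q k))) (measure_pmf (Q k)) (\<lambda>\<omega>. \<omega> k) = measure_pmf (Q k)"
    by (intro distr_PiM_component measure_pmf.prob_space_axioms) auto
  moreover have "integrable (measure_pmf (Q k)) f"
    by (rule integrable_measure_pmf_finite) simp
  ultimately show ?thesis
    using integrable_distr_eq[of "\<lambda>\<omega>. \<omega> k" "PiM UNIV (\<lambda>k. measure_pmf (Q k))" "measure_pmf (Q k)" f]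
    by (simp add: measurable_component_singleton)
qed

lemma indep_coords:
  "prob_space.indep_vars (PiM UNIV (\<lambda>k. measure_pmf (Q k))) (\<lambda>k. measure_pmf (Q k)) (\<lambda>k \<omega>. \<omega> k) UNIV"
proof -
  interpret prob_space "PiM UNIV (\<lambda>k. measure_pmf (Q k))" by (rule psM)
  show ?thesis
  proof (subst indep_vars_iff_distr_eq_PiM)
    show "distr (PiM UNIV (\<lambda>k. measure_pmf (Q k))) (PiM UNIV (\<lambda>k. measure_pmf (Q k))) (\<lambda>x. \<lambda>i\<in>UNIV. x i) =
      (PiM UNIV (\<lambda>i. distr (PiM UNIV (\<lambda>k. measure_pmf (Q k))) (measure_pmf (Q i)) (\<lambda>x. x i)))"
    proof -
      have e1: "(PiM UNIV (\<lambda>i. distr (PiM UNIV (\<lambda>k. measure_pmf (Q k))) (measure_pmf (Q i)) (\<lambda>x. x i)))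
          = PiM UNIV (\<lambda>k. measure_pmf (Q k))"
        by (intro PiM_cong refl distr_PiM_component measure_pmf.prob_space_axioms) auto
      have e2: "(\<lambda>x. \<lambda>i\<in>UNIV. x i) = (\<lambda>x::nat\<Rightarrow>bool. x)" by (simp add: restrict_UNIV)
      have e3: "distr (PiM UNIV (\<lambda>k. measure_pmf (Q k))) (PiM UNIV (\<lambda>k. measure_pmf (Q k))) (\<lambda>x. \<lambda>i\<in>UNIV. x i)
          = distr (PiM UNIV (\<lambda>k. measure_pmf (Q k))) (PiM UNIV (\<lambda>k. measure_pmf (Q k))) (\<lambda>x. x)"
        by (rule distr_cong) (auto simp: restrict_UNIV)
      show ?thesis unfolding e1 e3 by (rule distr_id)
    qed
  qed (auto simp: measurable_component_singleton)
qed

lemma indep_fun_coords: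
  "prob_space.indep_vars (PiM UNIV (\<lambda>k. measure_pmf (Q k))) (\<lambda>_. borel) (\<lambda>k \<omega>. (h k (\<omega> k) :: real)) I"
proof -
  interpret prob_space "PiM UNIV (\<lambda>k. measure_pmf (Q k))" by (rule psM)
  have "indep_vars (\<lambda>_. borel) (\<lambda>k \<omega>. (h k (\<omega> k) :: real)) UNIV"
    by (rule indep_vars_compose2[OF indep_coords]) auto
  then show ?thesis by (rule indep_vars_subset) auto
qed

lemma prod_coord:
  fixes Q :: "nat \<Rightarrow> bool pmf"
  assumes "j \<noteq> k"
  shows "integral\<^sup>L (PiM UNIV (\<lambda>k. measure_pmf (Q k))) (\<lambda>\<omega>. (f (\<omega> j) :: real) * g (\<omega> k))
     = integral\<^sup>L (measure_pmf (Q j)) f * integral\<^sup>L (measure_pmf (Q k)) g"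
proof -
  interpret prob_space "PiM UNIV (\<lambda>k. measure_pmf (Q k))" by (rule psM)
  define h where "h i = (if i = j then f else g)" for i
  have "integral\<^sup>L (PiM UNIV (\<lambda>k. measure_pmf (Q k))) (\<lambda>\<omega>. \<Prod>i\<in>{j,k}. h i (\<omega> i))
      = (\<Prod>i\<in>{j,k}. integral\<^sup>L (PiM UNIV (\<lambda>k. measure_pmf (Q k))) (\<lambda>\<omega>. h i (\<omega> i)))"
    by (intro indep_vars_lebesgue_integral indep_fun_coords) (use integrable_coord[of Q "h j" j] integrable_coord[of Q "h k" k] in auto)
  then show ?thesis using assms by (simp add: h_def int_coord)
qed

lemma integrable_prod_coord:
  fixes Q :: "nat \<Rightarrow> bool pmf"
  shows "integrable (PiM UNIV (\<lambda>k. measure_pmf (Q k))) (\<lambda>\<omega>. (f (\<omega> j) :: real) * g (\<omega> k))"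
proof (cases "j = k")
  case True
  then show ?thesis using integrable_coord[of Q "\<lambda>b. f b * g b" k] by simp
next
  case False
  interpret prob_space "PiM UNIV (\<lambda>k. measure_pmf (Q k))" by (rule psM)
  define h where "h i = (if i = j then f else g)" for i
  have "integrable (PiM UNIV (\<lambda>k. measure_pmf (Q k))) (\<lambda>\<omega>. \<Prod>i\<in>{j,k}. h i (\<omega> i))"
    by (intro indep_vars_integrable indep_fun_coords)
       (use integrable_coord[of Q "h j" j] integrable_coord[of Q "h k" k] in auto)
  then show ?thesis using False by (simp add: h_def)
qed



lemma slln_bounds:
  fixes Q :: "nat \<Rightarrow> bool pmf" and g :: "nat \<Rightarrow> bool \<Rightarrow> real" and C :: real
  assumes m2: "\<And>k. k \<ge> 1 \<Longrightarrow> integral\<^sup>L (Q k) (\<lambda>b. (g k b)^2) \<le> C"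
  defines "M \<equiv> PiM UNIV (\<lambda>k. measure_pmf (Q k))"
  defines "S \<equiv> (\<lambda>n \<omega>. (\<Sum>k=1..n. g k (\<omega> k) - integral\<^sup>L (Q k) (g k)))"
  shows "integral\<^sup>L M (S n) = 0" "integrable M (\<lambda>\<omega>. (S n \<omega>)^2)"
    "integral\<^sup>L M (\<lambda>\<omega>. (S n \<omega>)^2) \<le> C * real n"
proof -
  interpret P: prob_space M unfolding M_def by (rule psM)
  define m where "m k = integral\<^sup>L (Q k) (g k)" for k
  define Y where "Y k b = g k b - m k" for k b
  have S_eq: "S n \<omega> = (\<Sum>k=1..n. Y k (\<omega> k))" for n \<omega> unfolding S_def Y_def m_def by simp
  have intY: "\<And>k. integrable M (\<lambda>\<omega>. Y k (\<omega> k))" unfolding M_def by (rule integrable_coord)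
  have intQ: "\<And>k (f :: bool \<Rightarrow> real). integrable (measure_pmf (Q k)) f"
    by (rule integrable_measure_pmf_finite) simp
  have EYQ: "\<And>k. integral\<^sup>L (measure_pmf (Q k)) (Y k) = 0"
  proof -
    fix k
    have "integral\<^sup>L (measure_pmf (Q k)) (\<lambda>b. g k b - m k) = integral\<^sup>L (Q k) (g k) - integral\<^sup>L (measure_pmf (Q k)) (\<lambda>_. m k)"
      by (rule Bochner_Integration.integral_diff) (auto simp: intQ)
    then show "integral\<^sup>L (measure_pmf (Q k)) (Y k) = 0"
      unfolding Y_def by (simp add: m_def)
  qed
  have EY: "\<And>k. integral\<^sup>L M (\<lambda>\<omega>. Y k (\<omega> k)) = 0"
    unfolding M_def int_coord using EYQ by simp
  have EY2: "integral\<^sup>L M (\<lambda>\<omega>. Y k (\<omega> k) * Y k (\<omega> k)) \<le> C" if "k \<ge> 1" for k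
  proof -
    interpret Qk: prob_space "measure_pmf (Q k)" by (rule measure_pmf.prob_space_axioms)
    have "integral\<^sup>L M (\<lambda>\<omega>. Y k (\<omega> k) * Y k (\<omega> k)) = integral\<^sup>L (measure_pmf (Q k)) (\<lambda>b. Y k b * Y k b)"
      unfolding M_def using int_coord[of Q "\<lambda>b. Y k b * Y k b" k] by simp
    also have "\<dots> = integral\<^sup>L (measure_pmf (Q k)) (\<lambda>b. (g k b - integral\<^sup>L (measure_pmf (Q k)) (g k))^2)"
      unfolding Y_def m_def by (simp add: power2_eq_square)
    also have "\<dots> = integral\<^sup>L (Q k) (\<lambda>b. (g k b)^2) - (m k)^2"
      unfolding m_def by (rule prob_space.variance_eq[OF measure_pmf.prob_space_axioms]) (auto simp: intQ)
    also have "\<dots> \<le> C" using m2[OF that] by (smt (verit) zero_le_power2)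
    finally show ?thesis .
  qed
  show ES: "integral\<^sup>L M (S n) = 0"
    unfolding S_eq by (subst Bochner_Integration.integral_sum) (auto simp: intY EY)
  have sq: "(S n \<omega>)^2 = (\<Sum>i=1..n. \<Sum>j=1..n. Y i (\<omega> i) * Y j (\<omega> j))" for \<omega>
    unfolding S_eq power2_eq_square by (simp add: sum_product)
  have intprod: "integrable M (\<lambda>\<omega>. Y i (\<omega> i) * Y j (\<omega> j))" for i j
    unfolding M_def by (rule integrable_prod_coord)
  show "integrable M (\<lambda>\<omega>. (S n \<omega>)^2)"
    unfolding sq by (intro Bochner_Integration.integrable_sum intprod)
  have "integral\<^sup>L M (\<lambda>\<omega>. (S n \<omega>)^2) = (\<Sum>i=1..n. \<Sum>j=1..n. integral\<^sup>L M (\<lambda>\<omega>. Y i (\<omega> i) * Y j (\<omega> j)))"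
    unfolding sq by (simp add: Bochner_Integration.integral_sum Bochner_Integration.integrable_sum intprod)
  also have "\<dots> = (\<Sum>i=1..n. \<Sum>j=1..n. if j = i then integral\<^sup>L M (\<lambda>\<omega>. Y i (\<omega> i) * Y i (\<omega> i)) else 0)"
  proof (intro sum.cong refl)
    fix i j
    show "integral\<^sup>L M (\<lambda>\<omega>. Y i (\<omega> i) * Y j (\<omega> j)) = (if j = i then integral\<^sup>L M (\<lambda>\<omega>. Y i (\<omega> i) * Y i (\<omega> i)) else 0)"
      unfolding M_def using prod_coord[of i j Q "Y i" "Y j"] EYQ by auto
  qed
  also have "\<dots> = (\<Sum>i=1..n. integral\<^sup>L M (\<lambda>\<omega>. Y i (\<omega> i) * Y i (\<omega> i)))"
    by (simp add: sum.delta')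
  also have "\<dots> \<le> (\<Sum>i=1..n. C)" by (intro sum_mono EY2) auto
  also have "\<dots> = C * real n" by simp
  finally show "integral\<^sup>L M (\<lambda>\<omega>. (S n \<omega>)^2) \<le> C * real n" .
qed

lemma coord_meas[measurable]:
  "(\<lambda>\<omega>. (f :: bool \<Rightarrow> real) (\<omega> k)) \<in> borel_measurable (PiM UNIV (\<lambda>k. measure_pmf (Q k)))"
  by (rule measurable_compose[OF measurable_component_singleton]) auto

lemma slln:
  fixes Q :: "nat \<Rightarrow> bool pmf" and g :: "nat \<Rightarrow> bool \<Rightarrow> real" and C :: real
  assumes g0: "\<And>k b. k \<ge> 1 \<Longrightarrow> 0 \<le> g k b"
    and m1: "\<And>k. k \<ge> 1 \<Longrightarrow> integral\<^sup>L (Q k) (g k) \<le> C"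
    and m2: "\<And>k. k \<ge> 1 \<Longrightarrow> integral\<^sup>L (Q k) (\<lambda>b. (g k b)^2) \<le> C"
  shows "AE \<omega> in PiM UNIV (\<lambda>k. measure_pmf (Q k)).
           (\<lambda>n. (\<Sum>k=1..n. g k (\<omega> k) - integral\<^sup>L (Q k) (g k)) / real n) \<longlonglongrightarrow> 0"
proof -
  define M where "M = PiM UNIV (\<lambda>k. measure_pmf (Q k))"
  define S where "S = (\<lambda>n \<omega>. (\<Sum>k=1..n. g k (\<omega> k) - integral\<^sup>L (Q k) (g k)))"
  interpret P: prob_space M unfolding M_def by (rule psM)
  have Smeas[measurable]: "S n \<in> borel_measurable M" for n
    unfolding S_def M_def by measurable
  have bnd: "P.expectation (S n) = 0" "integrable M (\<lambda>\<omega>. (S n \<omega>)^2)"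
    "P.expectation (\<lambda>\<omega>. (S n \<omega>)^2) \<le> C * real n" for n
    using slln_bounds[of Q g C n, OF m2] unfolding M_def S_def by auto
  have key: "AE \<omega> in M. eventually (\<lambda>j. \<bar>S (j^2) \<omega>\<bar> < \<epsilon> * real (j^2)) sequentially"
    if eps: "\<epsilon> > 0" for \<epsilon>
  proof -
    define A where "A j = {\<omega> \<in> space M. \<epsilon> * real (j^2) \<le> \<bar>S (j^2) \<omega>\<bar>}" for j
    have Asets[measurable]: "A j \<in> sets M" for j unfolding A_def by measurable
    have Abnd: "measure M (A j) \<le> C / \<epsilon>^2 * inverse (real j ^ 2)" if j: "j \<ge> 1" for j
    proof -
      have a0: "\<epsilon> * real (j^2) > 0" using eps j by simp
      have "measure M (A j) = P.prob {x\<in>space M. \<epsilon> * real (j^2) \<le> \<bar>S (j^2) x - P.expectation (S (j^2))\<bar>}"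
        unfolding A_def bnd(1) by simp
      also have "\<dots> \<le> P.variance (S (j^2)) / (\<epsilon> * real (j^2))^2"
        by (rule P.Chebyshev_inequality) (use a0 bnd(2) in auto)
      also have "P.variance (S (j^2)) = P.expectation (\<lambda>\<omega>. (S (j^2) \<omega>)^2)"
        unfolding bnd(1) by simp
      also have "P.expectation (\<lambda>\<omega>. (S (j^2) \<omega>)^2) / (\<epsilon> * real (j^2))^2 \<le> (C * real (j^2)) / (\<epsilon> * real (j^2))^2"
        by (intro divide_right_mono bnd(3)) auto
      also have "(C * real (j^2)) / (\<epsilon> * real (j^2))^2 = C / \<epsilon>^2 * inverse (real j ^ 2)"
        using eps j by (simp add: field_simps power2_eq_square)
      finally show ?thesis .
    qed
    have summ: "summable (\<lambda>j. measure M (A j))"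
    proof (rule summable_comparison_test'[where N=1])
      show "summable (\<lambda>j. C / \<epsilon>^2 * inverse (real j ^ 2))"
        by (intro summable_mult inverse_power_summable) auto
      show "norm (measure M (A j)) \<le> C / \<epsilon>^2 * inverse (real j ^ 2)" if "j \<ge> 1" for j
        using Abnd[OF that] by simp
    qed
    have "AE \<omega> in M. eventually (\<lambda>j. \<omega> \<in> space M - A j) sequentially"
      by (rule borel_cantelli_AE1) (auto simp: summ P.emeasure_eq_measure)
    then show ?thesis
      by (rule eventually_mono) (auto simp: A_def elim!: eventually_mono)
  qed
  have "AE \<omega> in M. \<forall>i::nat. eventually (\<lambda>j. \<bar>S (j^2) \<omega>\<bar> < (1 / real (Suc i)) * real (j^2)) sequentially"
    unfolding AE_all_countable by (intro allI key) simp
  then have "AE \<omega> in M. (\<lambda>n. S n \<omega> / real n) \<longlonglongrightarrow> 0"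
  proof (rule eventually_mono)
    fix \<omega> assume H: "\<forall>i::nat. eventually (\<lambda>j. \<bar>S (j^2) \<omega>\<bar> < (1 / real (Suc i)) * real (j^2)) sequentially"
    define G where "G n = (\<Sum>k=1..n. g k (\<omega> k))" for n
    define U where "U n = (\<Sum>k=1..n. integral\<^sup>L (Q k) (g k))" for n
    have SGU: "S n \<omega> = G n - U n" for n unfolding S_def G_def U_def by (simp add: sum_subtractf)
    have mG: "mono G" unfolding mono_iff_le_Suc G_def using g0 by simp
    have mU: "mono U" unfolding mono_iff_le_Suc U_def using g0 by (simp add: integral_nonneg_AE)
    have iU: "U (Suc n) - U n \<le> C" for n unfolding U_def using m1[of "Suc n"] by simp
    have "(\<lambda>n. (G n - U n) / real n) \<longlonglongrightarrow> 0"
    proof (rule det_slln[OF mG mU iU])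
      fix e :: real assume "e > 0"
      then obtain i where i: "inverse (real (Suc i)) < e" using reals_Archimedean by blast
      show "eventually (\<lambda>j. \<bar>G (j^2) - U (j^2)\<bar> \<le> e * real (j^2)) sequentially"
        using H[rule_format, of i]
      proof (rule eventually_mono)
        fix j assume "\<bar>S (j^2) \<omega>\<bar> < (1 / real (Suc i)) * real (j^2)"
        moreover have "(1 / real (Suc i)) * real (j^2) \<le> e * real (j^2)"
          using i by (intro mult_right_mono) (auto simp: field_simps)
        ultimately show "\<bar>G (j^2) - U (j^2)\<bar> \<le> e * real (j^2)" using SGU by simp
      qed
    qed
    then show "(\<lambda>n. S n \<omega> / real n) \<longlonglongrightarrow> 0" using SGU by simp
  qed
  then show ?thesis unfolding M_def S_def .
qed



lemma cyl_measure:
  fixes Q :: "nat \<Rightarrow> bool pmf"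
  shows "measure (PiM UNIV (\<lambda>k. measure_pmf (Q k))) (cyl (PiM UNIV (\<lambda>k. measure_pmf (Q k))) \<omega> n)
     = (\<Prod>k\<in>{1..n}. pmf (Q k) (\<omega> k))"
proof -
  interpret PP: product_prob_space "\<lambda>k. measure_pmf (Q k)" UNIV
    by (simp add: product_prob_space_def product_prob_space_axioms_def product_sigma_finite_def
      measure_pmf.prob_space_axioms prob_space_imp_sigma_finite)
  have c: "cyl (PiM UNIV (\<lambda>k. measure_pmf (Q k))) \<omega> n
      = {x\<in>space (PiM UNIV (\<lambda>k. measure_pmf (Q k))). \<forall>i\<in>{1..n}. x i \<in> {\<omega> i}}"
    unfolding cyl_def by auto
  have "emeasure (PiM UNIV (\<lambda>k. measure_pmf (Q k))) (cyl (PiM UNIV (\<lambda>k. measure_pmf (Q k))) \<omega> n)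
      = (\<Prod>i\<in>{1..n}. emeasure (measure_pmf (Q i)) {\<omega> i})"
    unfolding c by (rule PP.emeasure_PiM_Collect) auto
  also have "\<dots> = ennreal (\<Prod>i\<in>{1..n}. pmf (Q i) (\<omega> i))"
    by (simp add: emeasure_pmf_single prod_ennreal)
  finally show ?thesis
    by (simp add: PP.emeasure_eq_measure prod_nonneg)
qed

lemma Ilen_pos_ln:
  assumes "\<forall>n\<ge>1. A n \<ge> (2::real)"
  shows "Ilen A n > 0 \<and> ln (Ilen A n) = - (\<Sum>k=1..n. ln (A k))"
proof (induction n)
  case 0 then show ?case by simp
next
  case (Suc n)
  have A: "A (Suc n) \<ge> 2" using assms by simp
  then have "Ilen A (Suc n) > 0" using Suc by simp
  moreover have "ln (Ilen A (Suc n)) = ln (Ilen A n) - ln (A (Suc n))"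
    using Suc A by (simp add: ln_div)
  ultimately show ?case using Suc by (simp add: sum.cl_ivl_Suc)
qed

lemma Iint_measure:
  assumes "\<forall>n\<ge>1. A n \<ge> (2::real)"
  shows "measure lborel (Iint A \<omega> n) = Ilen A n"
  using Ilen_pos_ln[OF assms, of n] unfolding Iint_def by simp

lemma dloc_formula:
  fixes Q :: "nat \<Rightarrow> bool pmf"
  assumes A: "\<forall>n\<ge>1. A n \<ge> (2::real)"
    and pos: "\<And>k. k \<in> {1..n} \<Longrightarrow> pmf (Q k) (\<omega> k) > 0"
  shows "dloc (PiM UNIV (\<lambda>k. measure_pmf (Q k))) A \<omega> n
      = (\<Sum>k=1..n. - ln (pmf (Q k) (\<omega> k))) / (\<Sum>k=1..n. ln (A k))"
proof -
  have "ln (\<Prod>k\<in>{1..n}. pmf (Q k) (\<omega> k)) = (\<Sum>k=1..n. ln (pmf (Q k) (\<omega> k)))"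
    using pos by (intro ln_prod) (auto simp: less_le)
  then show ?thesis
    unfolding dloc_def cyl_measure Iint_measure[OF A] using Ilen_pos_ln[OF A, of n]
    by (simp add: sum_negf minus_divide_divide)
qed

lemma final_comb:
  fixes T U B :: "nat \<Rightarrow> real"
  assumes B: "\<And>n. B n \<ge> real n * ln 2" and lim: "(\<lambda>n. (T n - U n) / real n) \<longlonglongrightarrow> 0"
  shows "liminf (\<lambda>n. ereal (T n / B n)) = liminf (\<lambda>n. ereal (U n / B n))
       \<and> limsup (\<lambda>n. ereal (T n / B n)) = limsup (\<lambda>n. ereal (U n / B n))"
proof -
  define d where "d n = T n / B n - U n / B n" for n
  have l2: "ln (2::real) > 0" by simp
  have "(\<lambda>n. (\<bar>T n - U n\<bar> / real n) / ln 2) \<longlonglongrightarrow> 0"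
    using tendsto_divide[OF tendsto_rabs_zero[OF lim] tendsto_const[of "ln 2"]] by simp
  moreover have "eventually (\<lambda>n. norm (d n) \<le> (\<bar>T n - U n\<bar> / real n) / ln 2) sequentially"
    unfolding eventually_sequentially
  proof (intro exI[of _ 1] allI impI)
    fix n :: nat assume n: "n \<ge> 1"
    have Bp: "B n \<ge> real n * ln 2" "real n * ln 2 > 0" using B[of n] n l2 by auto
    have "norm (d n) = \<bar>T n - U n\<bar> / B n" unfolding d_def using Bp by (simp add: diff_divide_distrib[symmetric])
    also have "\<dots> \<le> \<bar>T n - U n\<bar> / (real n * ln 2)" using Bp by (intro divide_left_mono) auto
    also have "\<dots> = (\<bar>T n - U n\<bar> / real n) / ln 2" by simp
    finally show "norm (d n) \<le> (\<bar>T n - U n\<bar> / real n) / ln 2" .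
  qed
  ultimately have d0: "d \<longlonglongrightarrow> 0" by (rule Lim_null_comparison[rotated])
  have u: "(\<lambda>n. ereal (d n)) \<longlonglongrightarrow> ereal 0" using d0 by (simp add: lim_ereal)
  have eq: "(\<lambda>n. ereal (T n / B n)) = (\<lambda>n. ereal (d n) + ereal (U n / B n))"
    unfolding d_def by simp
  show ?thesis
    unfolding eq using ereal_liminf_lim_add[OF u, of "\<lambda>n. ereal (U n / B n)"] ereal_limsup_lim_add[OF u, of "\<lambda>n. ereal (U n / B n)"] by (simp del: plus_ereal.simps)
qed



lemma neg_ln_bounds:
  fixes t :: real
  assumes "0 \<le> t" "t \<le> 1"
  shows "0 \<le> - ln t" "t * (- ln t) \<le> 1" "t * (ln t)^2 \<le> 4"
proof -
  have all: "0 \<le> - ln t \<and> t * (- ln t) \<le> 1 \<and> t * (ln t)^2 \<le> 4"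
  proof (cases "t = 0")
    case True then show ?thesis by simp
  next
    case False
    then have t0: "t > 0" using assms by simp
    have a: "0 \<le> - ln t" using t0 assms by simp
    have b1: "- ln t \<le> 1/t - 1" using ln_le_minus_one[of "1/t"] t0 by (simp add: ln_div)
    have b: "t * (- ln t) \<le> 1"
    proof -
      have "t * (- ln t) \<le> t * (1/t - 1)" using b1 t0 by (intro mult_left_mono) auto
      also have "\<dots> = 1 - t" using t0 by (simp add: field_simps)
      finally show ?thesis using t0 by simp
    qed
    define s where "s = sqrt t"
    have s0: "s > 0" using t0 s_def by simp
    have ts: "t = s * s" using t0 s_def by simp
    have lts: "ln t = 2 * ln s" using s0 ts by (simp add: ln_mult)
    have c1: "- ln s \<le> 1/s" using ln_le_minus_one[of "1/s"] s0 by (simp add: ln_div)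
    have c2: "0 \<le> - ln t \<and> - ln t \<le> 2 / s" using a lts c1 by simp
    have "(ln t)^2 = (- ln t)^2" by simp
    also have "\<dots> \<le> (2/s)^2" using c2 by (intro power_mono) auto
    finally have "t * (ln t)^2 \<le> t * (2/s)^2" using t0 by (intro mult_left_mono) auto
    also have "t * (2/s)^2 = 4" using ts s0 by (simp add: field_simps power2_eq_square)
    finally show ?thesis using a b by simp
  qed
  then show "0 \<le> - ln t" "t * (- ln t) \<le> 1" "t * (ln t)^2 \<le> 4" by auto
qed

lemma part_main:
  fixes A p' q :: "nat \<Rightarrow> real" and C :: real
  assumes A: "\<forall>n\<ge>1. A n \<ge> 2"
    and p': "\<forall>n\<ge>1. 0 \<le> p' n \<and> p' n \<le> 1"
    and q: "\<forall>n\<ge>1. 0 \<le> q n \<and> q n \<le> 1"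
    and m1: "\<forall>k\<ge>1. (1 - p' k) * (- ln (1 - q k)) + p' k * (- ln (q k)) \<le> C"
    and m2: "\<forall>k\<ge>1. (1 - p' k) * (ln (1 - q k))^2 + p' k * (ln (q k))^2 \<le> C"
    and posAE: "AE \<omega> in coding_meas p'. \<forall>k\<ge>1. (if \<omega> k then 1 - q k else q k) > 0"
  defines "zs \<equiv> (\<lambda>k. - p' k * ln (q k) - (1 - p' k) * ln (1 - q k))"
  shows "AE \<omega> in coding_meas p'.
            liminf (\<lambda>n. ereal (dloc (coding_meas q) A \<omega> n))
              = liminf (\<lambda>n. ereal ((\<Sum>k=1..n. zs k) / (\<Sum>k=1..n. ln (A k))))
          \<and> limsup (\<lambda>n. ereal (dloc (coding_meas q) A \<omega> n))
              = limsup (\<lambda>n. ereal ((\<Sum>k=1..n. zs k) / (\<Sum>k=1..n. ln (A k))))"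
proof -
  define Q' where "Q' k = bernoulli_pmf (1 - p' k)" for k
  define Q where "Q k = bernoulli_pmf (1 - q k)" for k
  define g where "g k b = - ln (if b then 1 - q k else q k)" for k b
  have nu': "coding_meas p' = PiM UNIV (\<lambda>k. measure_pmf (Q' k))" unfolding coding_meas_def Q'_def ..
  have nu: "coding_meas q = PiM UNIV (\<lambda>k. measure_pmf (Q k))" unfolding coding_meas_def Q_def ..
  have pmfQ: "pmf (Q k) b = (if b then 1 - q k else q k)" if "k \<ge> 1" for k b
    using q that unfolding Q_def by (cases b) auto
  have Eg: "integral\<^sup>L (Q' k) (g k) = zs k" if "k \<ge> 1" for k
    using p' that unfolding Q'_def g_def zs_def by (simp add: algebra_simps)
  have g0: "0 \<le> g k b" if "k \<ge> 1" for k b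
    using q that neg_ln_bounds(1)[of "q k"] neg_ln_bounds(1)[of "1 - q k"] unfolding g_def by auto
  have Eg1: "integral\<^sup>L (Q' k) (g k) \<le> C" if "k \<ge> 1" for k
    using p' m1 that unfolding Q'_def g_def by (simp add: algebra_simps)
  have Eg2: "integral\<^sup>L (Q' k) (\<lambda>b. (g k b)^2) \<le> C" if "k \<ge> 1" for k
    using p' m2 that unfolding Q'_def g_def by (simp add: algebra_simps)
  have sl: "AE \<omega> in coding_meas p'.
           (\<lambda>n. (\<Sum>k=1..n. g k (\<omega> k) - integral\<^sup>L (Q' k) (g k)) / real n) \<longlonglongrightarrow> 0"
    unfolding nu' by (rule slln) (auto intro: g0 Eg1 Eg2)
  define B where "B n = (\<Sum>k=1..n. ln (A k))" for n
  have Bge: "B n \<ge> real n * ln 2" for n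
  proof -
    have "(\<Sum>k=1..n. ln (2::real)) \<le> B n" unfolding B_def
      using A by (intro sum_mono) auto
    then show ?thesis by simp
  qed
  show ?thesis
    using sl posAE
  proof (eventually_elim)
    case (elim \<omega>)
    define T where "T n = (\<Sum>k=1..n. g k (\<omega> k))" for n
    define U where "U n = (\<Sum>k=1..n. zs k)" for n
    have lim: "(\<lambda>n. (T n - U n) / real n) \<longlonglongrightarrow> 0"
    proof -
      have "(\<Sum>k=1..n. g k (\<omega> k) - integral\<^sup>L (Q' k) (g k)) = T n - U n" for n
        unfolding T_def U_def sum_subtractf[symmetric] by (intro sum.cong) (auto simp: Eg)
      then show ?thesis using elim(1) by simp
    qed
    have dl: "dloc (coding_meas q) A \<omega> n = T n / B n" for n
    proof -
      have "dloc (coding_meas q) A \<omega> n = (\<Sum>k=1..n. - ln (pmf (Q k) (\<omega> k))) / (\<Sum>k=1..n. ln (A k))"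
        unfolding nu by (rule dloc_formula[OF A]) (use elim(2) pmfQ in auto)
      also have "(\<Sum>k=1..n. - ln (pmf (Q k) (\<omega> k))) = T n"
        unfolding T_def g_def by (intro sum.cong) (auto simp: pmfQ)
      finally show ?thesis unfolding B_def .
    qed
    show ?case unfolding dl using final_comb[OF Bge lim] unfolding U_def B_def by simp
  qed
qed



theorem lemma3p2:
  fixes A p p' :: "nat \<Rightarrow> real" and a b :: real
  assumes "\<forall>n\<ge>1. A n \<ge> 2"
    and "0 < a" and "a \<le> b" and "b < 1"
    and "\<forall>n\<ge>1. a \<le> p n \<and> p n \<le> b"
    and "\<forall>n\<ge>1. 0 \<le> p' n \<and> p' n \<le> 1"
  defines "\<nu> \<equiv> coding_meas p" and "\<nu>' \<equiv> coding_meas p'"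
    and "bs \<equiv> (\<lambda>k. ln (A k))"
    and "xs \<equiv> (\<lambda>k. - p' k * ln (p k) - (1 - p' k) * ln (1 - p k))"
    and "ys \<equiv> (\<lambda>k. - p' k * ln (p' k) - (1 - p' k) * ln (1 - p' k))"
  shows "(AE \<omega> in \<nu>'.
            liminf (\<lambda>n. ereal (dloc \<nu> A \<omega> n))
              = liminf (\<lambda>n. ereal ((\<Sum>k=1..n. xs k) / (\<Sum>k=1..n. bs k)))
          \<and> limsup (\<lambda>n. ereal (dloc \<nu> A \<omega> n))
              = limsup (\<lambda>n. ereal ((\<Sum>k=1..n. xs k) / (\<Sum>k=1..n. bs k))))
       \<and> (AE \<omega> in \<nu>'.
            liminf (\<lambda>n. ereal (dloc \<nu>' A \<omega> n))
              = liminf (\<lambda>n. ereal ((\<Sum>k=1..n. ys k) / (\<Sum>k=1..n. bs k)))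
          \<and> limsup (\<lambda>n. ereal (dloc \<nu>' A \<omega> n))
              = limsup (\<lambda>n. ereal ((\<Sum>k=1..n. ys k) / (\<Sum>k=1..n. bs k))))"
proof -
  define L where "L = - ln a - ln (1 - b)"
  have la: "0 \<le> - ln a" using assms(2-4) by simp
  have lb: "0 \<le> - ln (1 - b)" using assms(2-4) by simp
  have P1: "AE \<omega> in coding_meas p'.
            liminf (\<lambda>n. ereal (dloc (coding_meas p) A \<omega> n))
              = liminf (\<lambda>n. ereal ((\<Sum>k=1..n. xs k) / (\<Sum>k=1..n. ln (A k))))
          \<and> limsup (\<lambda>n. ereal (dloc (coding_meas p) A \<omega> n))
              = limsup (\<lambda>n. ereal ((\<Sum>k=1..n. xs k) / (\<Sum>k=1..n. ln (A k))))"
    unfolding xs_def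
  proof (rule part_main[where C = "L + L^2"])
    show "\<forall>n\<ge>1. 0 \<le> p n \<and> p n \<le> 1"
    proof (intro allI impI)
      fix n :: nat assume "n \<ge> 1"
      then have "a \<le> p n" "p n \<le> b" using assms(5) by auto
      then show "0 \<le> p n \<and> p n \<le> 1" using assms(2,4) by linarith
    qed
    have uv: "0 \<le> - ln (p k) \<and> - ln (p k) \<le> L \<and> 0 \<le> - ln (1 - p k) \<and> - ln (1 - p k) \<le> L" if "k \<ge> 1" for k
    proof -
      have pk: "a \<le> p k" "p k \<le> b" using assms(5) that by auto
      have "ln a \<le> ln (p k)" using pk assms(2) by simp
      moreover have "ln (1 - b) \<le> ln (1 - p k)" using pk assms(4) by simp
      moreover have "ln (p k) \<le> 0" using pk assms(2,4) by simp
      moreover have "ln (1 - p k) \<le> 0" using pk assms(2,4) by simp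
      ultimately show ?thesis using la lb unfolding L_def by linarith
    qed
    show "\<forall>k\<ge>1. (1 - p' k) * (- ln (1 - p k)) + p' k * (- ln (p k)) \<le> L + L^2"
    proof (intro allI impI)
      fix k :: nat assume k: "k \<ge> 1"
      have p'k: "0 \<le> p' k" "p' k \<le> 1" using assms(6) k by auto
      have "(1 - p' k) * (- ln (1 - p k)) + p' k * (- ln (p k)) \<le> (1 - p' k) * L + p' k * L"
        using uv[OF k] p'k by (intro add_mono mult_left_mono) auto
      also have "\<dots> = L" by (simp add: algebra_simps)
      finally show "(1 - p' k) * (- ln (1 - p k)) + p' k * (- ln (p k)) \<le> L + L^2"
        using zero_le_power2[of L] by linarith
    qed
    show "\<forall>k\<ge>1. (1 - p' k) * (ln (1 - p k))^2 + p' k * (ln (p k))^2 \<le> L + L^2"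
    proof (intro allI impI)
      fix k :: nat assume k: "k \<ge> 1"
      have p'k: "0 \<le> p' k" "p' k \<le> 1" using assms(6) k by auto
      have s1: "(ln (1 - p k))^2 \<le> L^2"
      proof -
        have "(ln (1 - p k))^2 = (- ln (1 - p k))^2" by simp
        also have "\<dots> \<le> L^2" using uv[OF k] by (intro power_mono) auto
        finally show ?thesis .
      qed
      have s2: "(ln (p k))^2 \<le> L^2"
      proof -
        have "(ln (p k))^2 = (- ln (p k))^2" by simp
        also have "\<dots> \<le> L^2" using uv[OF k] by (intro power_mono) auto
        finally show ?thesis .
      qed
      have "(1 - p' k) * (ln (1 - p k))^2 + p' k * (ln (p k))^2 \<le> (1 - p' k) * L^2 + p' k * L^2"
        using s1 s2 p'k by (intro add_mono mult_left_mono) auto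
      also have "\<dots> = L^2" by (simp add: algebra_simps)
      finally show "(1 - p' k) * (ln (1 - p k))^2 + p' k * (ln (p k))^2 \<le> L + L^2"
        using la lb L_def by linarith
    qed
    show "AE \<omega> in coding_meas p'. \<forall>k\<ge>1. (if \<omega> k then 1 - p k else p k) > 0"
    proof (rule AE_I2, intro allI impI)
      fix \<omega> :: "nat \<Rightarrow> bool" and k :: nat assume "k \<ge> 1"
      then have "a \<le> p k" "p k \<le> b" using assms(5) by auto
      then show "(if \<omega> k then 1 - p k else p k) > 0" using assms(2,4) by auto
    qed
  qed (use assms in auto)
  have P2: "AE \<omega> in coding_meas p'.
            liminf (\<lambda>n. ereal (dloc (coding_meas p') A \<omega> n))
              = liminf (\<lambda>n. ereal ((\<Sum>k=1..n. ys k) / (\<Sum>k=1..n. ln (A k))))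
          \<and> limsup (\<lambda>n. ereal (dloc (coding_meas p') A \<omega> n))
              = limsup (\<lambda>n. ereal ((\<Sum>k=1..n. ys k) / (\<Sum>k=1..n. ln (A k))))"
    unfolding ys_def
  proof (rule part_main[where C = 8])
    show "\<forall>k\<ge>1. (1 - p' k) * (- ln (1 - p' k)) + p' k * (- ln (p' k)) \<le> 8"
    proof (intro allI impI)
      fix k :: nat assume k: "k \<ge> 1"
      have p'k: "0 \<le> p' k" "p' k \<le> 1" using assms(6) k by auto
      show "(1 - p' k) * (- ln (1 - p' k)) + p' k * (- ln (p' k)) \<le> 8"
        using neg_ln_bounds(2)[of "p' k"] neg_ln_bounds(2)[of "1 - p' k"] p'k by linarith
    qed
    show "\<forall>k\<ge>1. (1 - p' k) * (ln (1 - p' k))^2 + p' k * (ln (p' k))^2 \<le> 8"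
    proof (intro allI impI)
      fix k :: nat assume k: "k \<ge> 1"
      have p'k: "0 \<le> p' k" "p' k \<le> 1" using assms(6) k by auto
      show "(1 - p' k) * (ln (1 - p' k))^2 + p' k * (ln (p' k))^2 \<le> 8"
        using neg_ln_bounds(3)[of "p' k"] neg_ln_bounds(3)[of "1 - p' k"] p'k by linarith
    qed
    have "AE \<omega> in coding_meas p'. \<forall>k. \<omega> k \<in> set_pmf (bernoulli_pmf (1 - p' k))"
      unfolding AE_all_countable coding_meas_def
    proof
      fix k
      show "AE \<omega> in PiM UNIV (\<lambda>k. measure_pmf (bernoulli_pmf (1 - p' k))). \<omega> k \<in> set_pmf (bernoulli_pmf (1 - p' k))"
        by (rule AE_PiM_component[where P = "\<lambda>x. x \<in> set_pmf (bernoulli_pmf (1 - p' k))"])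
           (auto simp: measure_pmf.prob_space_axioms AE_measure_pmf)
    qed
    then show "AE \<omega> in coding_meas p'. \<forall>k\<ge>1. (if \<omega> k then 1 - p' k else p' k) > 0"
    proof (rule eventually_mono, intro allI impI)
      fix \<omega> :: "nat \<Rightarrow> bool" and k :: nat
      assume H: "\<forall>k. \<omega> k \<in> set_pmf (bernoulli_pmf (1 - p' k))" and k: "k \<ge> 1"
      have p'k: "0 \<le> p' k" "p' k \<le> 1" using assms(6) k by auto
      have "pmf (bernoulli_pmf (1 - p' k)) (\<omega> k) > 0" using H pmf_positive by metis
      then show "(if \<omega> k then 1 - p' k else p' k) > 0" using p'k by (cases "\<omega> k") auto
    qed
  qed (use assms in auto)
  show ?thesis using P1 P2 unfolding \<nu>_def \<nu>'_def bs_def by simp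
qed


end
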